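(* Let $G$ be a connected graph with $|V(G)|\ge 3$ and $L(G)=2l(G)$, and let $V_1(G)$ be as in the context. Then: (1) for any maximum matchings $F_L,F_l$ of $G$ with $\nu(G\setminus F_L)=L(G)$ and $\nu(G\setminus F_l)=l(G)$, we have $(V(F_L)\setminus V(F_l))\cap V_1(G)=\emptyset$; (2) there exist a maximum matching $F_l$ of $G$ with $\nu(G\setminus F_l)=l(G)$ and a maximum matching $F_L$ of $G$ with $\nu(G\setminus F_L)=L(G)$ such that $V_1(G)\subseteq V(F_L\cap F_l)\cup (V(F_l)\setminus V(F_L))$.
   Context: Graphs are finite, undirected, without loops or multiple edges. $\nu(G)$ denotes the maximum size of a matching of $G$; a matching is maximum if it has $\nu(G)$ edges. For $F\subseteq E(G)$, $G\setminus F$ is the graph with vertex set $V(G)$ and edge set $E(G)\setminus F$, and $V(F)$ is the set of vertices incident to some edge of $F$. Define $L(G)=\max\{\nu(G\setminus F): F \text{ a maximum matching of } G\}$ and $l(G)=\min\{\nu(G\setminus F): F \text{ a maximum matching of } G\}$. A triangle is a cycle of length 3. Let $T$ be the set of triangles of $G$ containing at least two vertices of degree two (each vertex of degree two lies in at most one triangle of $T$). From each $t\in T$ choose one vertex $v_t$ of $t$ of degree two, and set $V_1(G)=\{v: \deg_G(v)=1\}\cup\{v_t: t\in T\}$. *)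

theory Defs
  imports Main
begin

definition simple_graph :: "'a set \<Rightarrow> 'a set set \<Rightarrow> bool" where
  "simple_graph V E \<longleftrightarrow> finite V \<and> (\<forall>e\<in>E. \<exists>u v. e = {u, v} \<and> u \<noteq> v \<and> u \<in> V \<and> v \<in> V)"

definition graph_connected :: "'a set \<Rightarrow> 'a set set \<Rightarrow> bool" where
  "graph_connected V E \<longleftrightarrow>
     (\<forall>u\<in>V. \<forall>v\<in>V. (u, v) \<in> {(x, y). {x, y} \<in> E}\<^sup>*)"

definition degree :: "'a set set \<Rightarrow> 'a \<Rightarrow> nat" where
  "degree E v = card {e \<in> E. v \<in> e}"

definition matching :: "'a set set \<Rightarrow> bool" where
  "matching M \<longleftrightarrow> (\<forall>e1\<in>M. \<forall>e2\<in>M. e1 \<noteq> e2 \<longrightarrow> e1 \<inter> e2 = {})"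

definition matching_in :: "'a set set \<Rightarrow> 'a set set \<Rightarrow> bool" where
  "matching_in E M \<longleftrightarrow> M \<subseteq> E \<and> matching M"

text \<open>\<nu>: maximum size of a matching (E finite). Removing edges keeps the vertex set,
  which does not affect matchings, so \<nu> depends only on the edge set.\<close>
definition nu :: "'a set set \<Rightarrow> nat" where
  "nu E = Max (card ` {M. matching_in E M})"

definition max_matching :: "'a set set \<Rightarrow> 'a set set \<Rightarrow> bool" where
  "max_matching E M \<longleftrightarrow> matching_in E M \<and> card M = nu E"

definition L_num :: "'a set set \<Rightarrow> nat" where
  "L_num E = Max ((\<lambda>F. nu (E - F)) ` {F. max_matching E F})"

definition l_num :: "'a set set \<Rightarrow> nat" where
  "l_num E = Min ((\<lambda>F. nu (E - F)) ` {F. max_matching E F})"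

definition Vs :: "'a set set \<Rightarrow> 'a set" where
  "Vs F = \<Union>F"

definition triangle :: "'a set set \<Rightarrow> 'a set \<Rightarrow> bool" where
  "triangle E t \<longleftrightarrow> (\<exists>a b c. t = {a, b, c} \<and> a \<noteq> b \<and> b \<noteq> c \<and> a \<noteq> c \<and>
                                {a, b} \<in> E \<and> {b, c} \<in> E \<and> {a, c} \<in> E)"

definition Tri2 :: "'a set set \<Rightarrow> 'a set set" where
  "Tri2 E = {t. triangle E t \<and> 2 \<le> card {v \<in> t. degree E v = 2}}"

text \<open>S is a valid V_1(G): the degree-one vertices together with one chosen
  degree-two vertex v_t from each t in T.\<close>
definition is_V1 :: "'a set \<Rightarrow> 'a set set \<Rightarrow> 'a set \<Rightarrow> bool" where
  "is_V1 V E S \<longleftrightarrow> (\<exists>f. (\<forall>t\<in>Tri2 E. f t \<in> t \<and> degree E (f t) = 2) \<and>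
                      S = {v \<in> V. degree E v = 1} \<union> f ` Tri2 E)"

end

theory Submission
  imports Defs
begin


lemma finE: "simple_graph V E \<Longrightarrow> finite E"
proof -
  assume s: "simple_graph V E"
  have "E \<subseteq> Pow V"
  proof
    fix e assume "e \<in> E"
    then obtain u v where "e = {u,v}" "u \<in> V" "v \<in> V" using s unfolding simple_graph_def by metis
    thus "e \<in> Pow V" by simp
  qed
  moreover have "finite (Pow V)" using s unfolding simple_graph_def by simp
  ultimately show ?thesis by (rule finite_subset)
qed

lemma edge_other: "simple_graph V E \<Longrightarrow> e \<in> E \<Longrightarrow> v \<in> e \<Longrightarrow> \<exists>u. u \<noteq> v \<and> e = {v,u}"
proof -
  assume s: "simple_graph V E" and e: "e \<in> E" and v: "v \<in> e"
  obtain a b where "e = {a,b}" "a \<noteq> b" using s e unfolding simple_graph_def by metis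
  thus ?thesis using v by auto
qed

lemma edge_ne: "simple_graph V E \<Longrightarrow> e \<in> E \<Longrightarrow> e \<noteq> {}"
  unfolding simple_graph_def by fastforce
lemma matchingD: "matching M \<Longrightarrow> e \<in> M \<Longrightarrow> e' \<in> M \<Longrightarrow> x \<in> e \<Longrightarrow> x \<in> e' \<Longrightarrow> e = e'"
  unfolding matching_def by blast

lemma matching_subset: "matching M \<Longrightarrow> N \<subseteq> M \<Longrightarrow> matching N"
  unfolding matching_def by blast

lemma matching_insert: "matching M \<Longrightarrow> (\<forall>k\<in>M. k \<inter> e = {}) \<Longrightarrow> matching (insert e M)"
  unfolding matching_def by blast

lemma Vs_iff: "x \<in> Vs F \<longleftrightarrow> (\<exists>e\<in>F. x \<in> e)"
  unfolding Vs_def by blast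

lemma fin_matchings: "finite E \<Longrightarrow> finite {M. matching_in E M}"
  by (rule finite_subset[of _ "Pow E"]) (auto simp: matching_in_def)

lemma nu_upper: "finite E \<Longrightarrow> matching_in E M \<Longrightarrow> card M \<le> nu E"
  unfolding nu_def using fin_matchings by (intro Max_ge) auto

lemma nu_attained: "finite E \<Longrightarrow> \<exists>M. matching_in E M \<and> card M = nu E"
proof -
  assume f: "finite E"
  have "matching_in E {}" by (simp add: matching_in_def matching_def)
  hence "nu E \<in> card ` {M. matching_in E M}" unfolding nu_def using fin_matchings[OF f]
    by (intro Max_in) auto
  thus ?thesis by auto
qed

lemma fin_maxm: "finite E \<Longrightarrow> finite {F. max_matching E F}"
  by (rule finite_subset[of _ "Pow E"]) (auto simp: max_matching_def matching_in_def)

lemma ne_maxm: "finite E \<Longrightarrow> {F. max_matching E F} \<noteq> {}"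
  using nu_attained unfolding max_matching_def by blast

lemma L_upper: "finite E \<Longrightarrow> max_matching E F \<Longrightarrow> nu (E - F) \<le> L_num E"
  unfolding L_num_def using fin_maxm by (intro Max_ge) auto

lemma l_lower: "finite E \<Longrightarrow> max_matching E F \<Longrightarrow> l_num E \<le> nu (E - F)"
  unfolding l_num_def using fin_maxm by (intro Min_le) auto

lemma L_attained: "finite E \<Longrightarrow> \<exists>F. max_matching E F \<and> nu (E - F) = L_num E"
proof -
  assume f: "finite E"
  have "L_num E \<in> (\<lambda>F. nu (E - F)) ` {F. max_matching E F}" unfolding L_num_def
    using fin_maxm[OF f] ne_maxm[OF f] by (intro Max_in) auto
  thus ?thesis by auto
qed

lemma l_attained: "finite E \<Longrightarrow> \<exists>F. max_matching E F \<and> nu (E - F) = l_num E"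
proof -
  assume f: "finite E"
  have "l_num E \<in> (\<lambda>F. nu (E - F)) ` {F. max_matching E F}" unfolding l_num_def
    using fin_maxm[OF f] ne_maxm[OF f] by (intro Min_in) auto
  thus ?thesis by auto
qed

lemma max_meets:
  assumes s: "simple_graph V E" and m: "max_matching E F" and e: "e \<in> E"
  shows "\<exists>g\<in>F. g \<inter> e \<noteq> {}"
proof (rule ccontr)
  assume "\<not> ?thesis"
  hence dis: "\<forall>g\<in>F. g \<inter> e = {}" by blast
  have fE: "finite E" using finE[OF s] .
  have FE: "F \<subseteq> E" and mF: "matching F" using m unfolding max_matching_def matching_in_def by auto
  have "e \<notin> F" using dis edge_ne[OF s e] by blast
  have "matching_in E (insert e F)" using matching_insert[OF mF dis] FE e
    unfolding matching_in_def by blast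
  hence "card (insert e F) \<le> nu E" using nu_upper[OF fE] by blast
  moreover have "card (insert e F) = card F + 1" using \<open>e \<notin> F\<close> finite_subset[OF FE fE] by simp
  moreover have "card F = nu E" using m unfolding max_matching_def by simp
  ultimately show False by simp
qed

lemma card2_eq: "finite A \<Longrightarrow> card A = 2 \<Longrightarrow> p \<in> A \<Longrightarrow> q \<in> A \<Longrightarrow> p \<noteq> q \<Longrightarrow> A = {p,q}"
  by (auto simp: card_2_iff)

lemma tri_edge: "triangle E t \<Longrightarrow> p \<in> t \<Longrightarrow> q \<in> t \<Longrightarrow> p \<noteq> q \<Longrightarrow> {p,q} \<in> E"
  unfolding triangle_def by (auto simp: insert_commute)



locale lg = fixes V :: "'a set" and E :: "'a set set"
  assumes sg: "simple_graph V E" and eq: "L_num E = 2 * l_num E"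
begin

definition optL where "optL F \<longleftrightarrow> max_matching E F \<and> nu (E - F) = L_num E"
definition optl where "optl F \<longleftrightarrow> max_matching E F \<and> nu (E - F) = l_num E"

lemma fin: "finite E" using finE sg .

lemma mm_facts: assumes "max_matching E F"
  shows "F \<subseteq> E" "matching F" "card F = nu E" "finite F"
  using assms fin finite_subset unfolding max_matching_def matching_in_def by auto

lemma exM: "optL FL \<Longrightarrow> \<exists>M. matching_in (E - FL) M \<and> card M = L_num E"
  using nu_attained[of "E - FL"] fin unfolding optL_def by auto

lemma key:
  assumes L: "optL FL" and l: "optl Fl" and M: "matching_in (E - FL) M" and cM: "card M = L_num E"
  shows "Fl - FL \<subseteq> M \<and> card (FL - Fl) = l_num E"
proof -
  have mL: "max_matching E FL" and ml: "max_matching E Fl" using L l unfolding optL_def optl_def by auto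
  note fL = mm_facts[OF mL] and fl = mm_facts[OF ml]
  have fM: "finite M" using M fin finite_subset unfolding matching_in_def by blast
  have c1: "card (M - Fl) \<le> l_num E"
  proof -
    have "matching_in (E - Fl) (M - Fl)" using M matching_subset unfolding matching_in_def by blast
    hence "card (M - Fl) \<le> nu (E - Fl)" using nu_upper fin by blast
    thus ?thesis using l unfolding optl_def by simp
  qed
  have c2: "card (FL - Fl) \<le> l_num E"
  proof -
    have "matching_in (E - Fl) (FL - Fl)" using fL matching_subset unfolding matching_in_def by blast
    hence "card (FL - Fl) \<le> nu (E - Fl)" using nu_upper fin by blast
    thus ?thesis using l unfolding optl_def by simp
  qed
  have c3: "card (Fl - FL) = card (FL - Fl)"
  proof -
    have "card (Fl - FL) = card Fl - card (Fl \<inter> FL)" using fl(4) card_Diff_subset_Int by (simp add: card_Diff_subset_Int)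
    moreover have "card (FL - Fl) = card FL - card (FL \<inter> Fl)" using fL(4) by (simp add: card_Diff_subset_Int)
    ultimately show ?thesis using fl(3) fL(3) by (simp add: Int_commute)
  qed
  have c4: "M \<inter> Fl \<subseteq> Fl - FL" using M unfolding matching_in_def by blast
  have c5: "card M = card (M - Fl) + card (M \<inter> Fl)" using fM
    by (metis card_Int_Diff add.commute)
  have c6: "card (M \<inter> Fl) \<le> card (Fl - FL)" using c4 fl(4) by (simp add: card_mono)
  have c7: "card (M \<inter> Fl) = card (Fl - FL)" using c1 c2 c3 c5 c6 cM eq by linarith
  have "M \<inter> Fl = Fl - FL" using c4 c7 fl(4) by (simp add: card_subset_eq)
  thus ?thesis using c1 c2 c3 c5 c6 cM eq by auto
qed

lemma cardLl: "optL FL \<Longrightarrow> optl Fl \<Longrightarrow> card (FL - Fl) = l_num E"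
  using exM key by blast

lemma coreA:
  assumes L: "optL FL" and l: "optl Fl" and v: "v \<notin> Vs Fl" and e: "e \<in> FL" "e = {v,u}"
    and g: "g \<in> Fl" "u \<in> g" "v \<notin> g" and oth: "\<forall>f\<in>E. v \<in> f \<longrightarrow> f \<noteq> e \<longrightarrow> f \<inter> g \<noteq> {}"
  shows False
proof -
  obtain M where M: "matching_in (E - FL) M" "card M = L_num E" using exM[OF L] by blast
  have mL: "max_matching E FL" and ml: "max_matching E Fl" using L l unfolding optL_def optl_def by auto
  note fL = mm_facts[OF mL] and fl = mm_facts[OF ml]
  have k: "Fl - FL \<subseteq> M" "card (FL - Fl) = l_num E" using key[OF L l M] by auto
  have mM: "matching M" and ME: "M \<subseteq> E - FL" using M unfolding matching_in_def by auto
  have fM: "finite M" using ME fin finite_subset by blast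
  have "g \<noteq> e" using g e by auto
  hence "g \<notin> FL" using matchingD[OF fL(2) _ e(1), of g u] g e by auto
  hence gM: "g \<in> M" using k g by blast
  have c1: "card (M - Fl) \<ge> l_num E"
  proof -
    have "card (M \<inter> Fl) \<le> card (Fl - FL)" using ME fl(4) by (intro card_mono) auto
    moreover have "card (Fl - FL) = card (FL - Fl)"
      using fl(4) fL(4) fl(3) fL(3) by (simp add: card_Diff_subset_Int Int_commute)
    moreover have "card M = card (M - Fl) + card (M \<inter> Fl)" using fM by (metis card_Int_Diff add.commute)
    ultimately show ?thesis using M(2) k(2) eq by linarith
  qed
  define N where "N = insert e (M - Fl)"
  have eN: "e \<notin> M - Fl" using ME e by blast
  have disj: "\<forall>h\<in>M - Fl. h \<inter> e = {}"
  proof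
    fix h assume h: "h \<in> M - Fl"
    have "v \<notin> h"
    proof
      assume "v \<in> h"
      moreover have "h \<in> E" "h \<noteq> e" using h ME e by auto
      ultimately have "h \<inter> g \<noteq> {}" using oth by blast
      moreover have "h \<noteq> g" using h g by auto
      ultimately show False using mM h gM unfolding matching_def by blast
    qed
    moreover have "u \<notin> h"
    proof
      assume "u \<in> h"
      moreover have "h \<noteq> g" using h g by auto
      ultimately show False using matchingD[OF mM, of h g u] h gM g by auto
    qed
    ultimately show "h \<inter> e = {}" using e by auto
  qed
  have "matching_in (E - Fl) N"
  proof -
    have "e \<in> E" using e fL(1) by auto
    moreover have "e \<notin> Fl" using v e by (auto simp: Vs_iff)
    moreover have "matching (M - Fl)" using mM matching_subset by blast
    ultimately show ?thesis unfolding N_def matching_in_def using matching_insert[OF _ disj] ME by blast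
  qed
  hence "card N \<le> nu (E - Fl)" using nu_upper fin by blast
  moreover have "card N = card (M - Fl) + 1" unfolding N_def using eN fM by simp
  ultimately show False using c1 l unfolding optl_def by simp
qed

lemma coreB:
  assumes L: "optL FL" and l: "optl Fl" and e: "e \<in> E" "e = {v,u}" and vL: "v \<notin> Vs FL" and vl: "v \<notin> Vs Fl"
    and h: "h \<in> FL" "u \<in> h" "h \<in> Fl"
  shows False
proof -
  have mL: "max_matching E FL" and ml: "max_matching E Fl" using L l unfolding optL_def optl_def by auto
  note fL = mm_facts[OF mL] and fl = mm_facts[OF ml]
  define N where "N = insert e (FL - Fl)"
  have eN: "e \<notin> FL - Fl" using vL e by (auto simp: Vs_iff)
  have disj: "\<forall>k\<in>FL - Fl. k \<inter> e = {}"
  proof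
    fix k assume k: "k \<in> FL - Fl"
    have "v \<notin> k" using k vL by (auto simp: Vs_iff)
    moreover have "u \<notin> k"
    proof
      assume "u \<in> k"
      hence "k = h" using matchingD[OF fL(2), of k h u] k h by auto
      thus False using k h by auto
    qed
    ultimately show "k \<inter> e = {}" using e by auto
  qed
  have "matching_in (E - Fl) N"
  proof -
    have "e \<notin> Fl" using vl e by (auto simp: Vs_iff)
    moreover have "matching (FL - Fl)" using fL(2) matching_subset by blast
    ultimately show ?thesis unfolding N_def matching_in_def using matching_insert[OF _ disj] fL(1) e by blast
  qed
  hence "card N \<le> nu (E - Fl)" using nu_upper fin by blast
  moreover have "card N = card (FL - Fl) + 1" unfolding N_def using eN fL(4) by simp
  ultimately show False using cardLl[OF L l] l unfolding optl_def by simp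
qed

end


lemma third: "t = {a,b,c} \<Longrightarrow> x \<in> t \<Longrightarrow> d \<in> t \<Longrightarrow> x \<noteq> d \<Longrightarrow> a \<noteq> b \<Longrightarrow> b \<noteq> c \<Longrightarrow> a \<noteq> c \<Longrightarrow>
   \<exists>w. w \<noteq> x \<and> w \<noteq> d \<and> t = {x,d,w}"
  apply (simp only:)
  apply (elim insertE; simp)
  apply (rule exI[of _ c], simp add: insert_commute)
  apply (rule exI[of _ b], simp add: insert_commute)
  apply (rule exI[of _ c], simp add: insert_commute)
  apply (rule exI[of _ b], simp add: insert_commute)
  apply (rule exI[of _ a], simp add: insert_commute)
  apply (rule exI[of _ a], simp add: insert_commute)
  done

context lg begin

definition W where "W x \<longleftrightarrow> degree E x = 1 \<or> (degree E x = 2 \<and> (\<exists>t\<in>Tri2 E. x \<in> t))"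

lemma deg1_uniq: "degree E x = 1 \<Longrightarrow> e \<in> E \<Longrightarrow> e' \<in> E \<Longrightarrow> x \<in> e \<Longrightarrow> x \<in> e' \<Longrightarrow> e = e'"
proof -
  assume a: "degree E x = 1" "e \<in> E" "e' \<in> E" "x \<in> e" "x \<in> e'"
  have c: "card {e\<in>E. x\<in>e} = 1" using a(1) unfolding degree_def .
  obtain z where z: "{e\<in>E. x\<in>e} = {z}" using c by (rule card_1_singletonE)
  have "e \<in> {e\<in>E. x\<in>e}" "e' \<in> {e\<in>E. x\<in>e}" using a by simp_all
  thus "e = e'" using z by simp
qed

lemma tri_struct:
  assumes t: "t \<in> Tri2 E" and x: "x \<in> t" and dx: "degree E x = 2"
  shows "\<exists>d w. x\<noteq>d \<and> x\<noteq>w \<and> d\<noteq>w \<and> t = {x,d,w} \<and> {x,d} \<in> E \<and> {x,w} \<in> E \<and> {d,w} \<in> E \<and>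
     degree E d = 2 \<and> {e\<in>E. x\<in>e} = {{x,d},{x,w}} \<and> {e\<in>E. d\<in>e} = {{x,d},{d,w}}"
proof -
  have tr: "triangle E t" and c: "2 \<le> card {v \<in> t. degree E v = 2}" using t unfolding Tri2_def by auto
  obtain a b c where abc: "t = {a,b,c}" "a \<noteq> b" "b \<noteq> c" "a \<noteq> c" using tr unfolding triangle_def by metis
  have ft: "finite t" using abc by simp
  obtain d where d: "d \<in> t" "d \<noteq> x" "degree E d = 2"
  proof -
    have "\<not> {v \<in> t. degree E v = 2} \<subseteq> {x}"
    proof
      assume "{v \<in> t. degree E v = 2} \<subseteq> {x}"
      hence "card {v \<in> t. degree E v = 2} \<le> card {x}" using card_mono[of "{x}" "{v \<in> t. degree E v = 2}"] by simp
      thus False using c by simp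
    qed
    thus ?thesis using that by blast
  qed
  obtain w where w: "w \<noteq> x" "w \<noteq> d" "t = {x,d,w}" using third[OF abc(1) x d(1) d(2)[symmetric] abc(2-4)] by blast
  have e1: "{x,d} \<in> E" "{x,w} \<in> E" "{d,w} \<in> E" using tri_edge[OF tr] w d x by auto
  have s1: "{e\<in>E. x\<in>e} = {{x,d},{x,w}}"
    by (rule card2_eq) (use dx e1 fin w d in \<open>auto simp: degree_def doubleton_eq_iff\<close>)
  have s2: "{e\<in>E. d\<in>e} = {{x,d},{d,w}}"
    by (rule card2_eq) (use d e1 fin w d in \<open>auto simp: degree_def doubleton_eq_iff\<close>)
  show ?thesis apply (rule exI[of _ d], rule exI[of _ w]) using s1 s2 e1 w d by simp
qed

lemma tri_unique:
  assumes tr: "triangle E t'" and y: "y \<in> t'" and s: "{e\<in>E. y\<in>e} = {{y,p},{y,q}}" and pq: "p \<noteq> q" "p \<noteq> y" "q \<noteq> y"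
  shows "t' = {y,p,q}"
proof -
  obtain a b c where abc: "t' = {a,b,c}" "a \<noteq> b" "b \<noteq> c" "a \<noteq> c" using tr unfolding triangle_def by metis
  have nb: "\<And>z. z \<in> t' \<Longrightarrow> z \<noteq> y \<Longrightarrow> z = p \<or> z = q"
  proof -
    fix z assume "z \<in> t'" "z \<noteq> y"
    hence "{y,z} \<in> {e\<in>E. y\<in>e}" using tri_edge[OF tr y] by auto
    hence "{y,z} = {y,p} \<or> {y,z} = {y,q}" using s by auto
    thus "z = p \<or> z = q" using \<open>z \<noteq> y\<close> by (auto simp: doubleton_eq_iff)
  qed
  have "t' \<subseteq> {y,p,q}" using nb by blast
  moreover have "card t' = 3" using abc by simp
  moreover have "card {y,p,q} = 3" using pq by simp
  ultimately show ?thesis by (simp add: card_subset_eq)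
qed

end

context lg begin

lemma ml_of: "optL F \<Longrightarrow> max_matching E F" "optl F \<Longrightarrow> max_matching E F"
  unfolding optL_def optl_def by auto

lemma P1W:
  assumes L: "optL FL" and l: "optl Fl" and Wv: "W v" and vL: "v \<in> Vs FL" and vl: "v \<notin> Vs Fl"
  shows False
proof -
  note fL = mm_facts[OF ml_of(1)[OF L]] and fl = mm_facts[OF ml_of(2)[OF l]]
  obtain e where e: "e \<in> FL" "v \<in> e" using vL by (auto simp: Vs_iff)
  have eE: "e \<in> E" using e fL(1) by auto
  obtain u where u: "u \<noteq> v" "e = {v,u}" using edge_other[OF sg eE e(2)] by blast
  have vng: "\<And>g. g \<in> Fl \<Longrightarrow> v \<notin> g" using vl by (auto simp: Vs_iff)
  from Wv consider (d1) "degree E v = 1" | (d2) t where "degree E v = 2" "t \<in> Tri2 E" "v \<in> t"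
    unfolding W_def by blast
  then show False
  proof cases
    case d1
    obtain g where g: "g \<in> Fl" "g \<inter> e \<noteq> {}" using max_meets[OF sg ml_of(2)[OF l] eE] by blast
    have "u \<in> g" using g vng[OF g(1)] u by auto
    moreover have "\<forall>f\<in>E. v \<in> f \<longrightarrow> f \<noteq> e \<longrightarrow> f \<inter> g \<noteq> {}"
      using deg1_uniq[OF d1 _ eE _ e(2)] by blast
    ultimately show False using coreA[OF L l vl e(1) u(2) g(1) _ vng[OF g(1)]] by blast
  next
    case d2
    obtain d w where s: "v\<noteq>d" "v\<noteq>w" "d\<noteq>w" "t = {v,d,w}" "{v,d} \<in> E" "{v,w} \<in> E" "{d,w} \<in> E"
      "degree E d = 2" "{e\<in>E. v\<in>e} = {{v,d},{v,w}}" "{e\<in>E. d\<in>e} = {{v,d},{d,w}}"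
      using tri_struct[OF d2(2) d2(3) d2(1)] by blast
    obtain g where g: "g \<in> Fl" "g \<inter> {v,d} \<noteq> {}" using max_meets[OF sg ml_of(2)[OF l] s(5)] by blast
    have "d \<in> g" using g vng[OF g(1)] by auto
    moreover have "g \<in> E" using g fl(1) by auto
    ultimately have "g \<in> {e\<in>E. d\<in>e}" by simp
    hence "g = {v,d} \<or> g = {d,w}" using s(10) by simp
    hence gdw: "g = {d,w}" using vng[OF g(1)] by auto
    have "e \<in> {e\<in>E. v\<in>e}" using eE e by simp
    hence "e = {v,d} \<or> e = {v,w}" using s(9) by simp
    hence "u \<in> g" using u gdw by (auto simp: doubleton_eq_iff)
    moreover have "\<forall>f\<in>E. v \<in> f \<longrightarrow> f \<noteq> e \<longrightarrow> f \<inter> g \<noteq> {}"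
    proof (intro ballI impI)
      fix f assume "f \<in> E" "v \<in> f" "f \<noteq> e"
      hence "f \<in> {e\<in>E. v\<in>e}" by simp
      hence "f = {v,d} \<or> f = {v,w}" using s(9) by simp
      thus "f \<inter> g \<noteq> {}" using gdw by auto
    qed
    ultimately show False using coreA[OF L l vl e(1) u(2) g(1) _ vng[OF g(1)]] by blast
  qed
qed

lemma H1:
  assumes l: "optl Fl" and Wv: "W v"
  shows "v \<in> Vs Fl"
proof (rule ccontr)
  assume vl: "v \<notin> Vs Fl"
  obtain FL where L: "optL FL" using L_attained[OF fin] unfolding optL_def by blast
  note fL = mm_facts[OF ml_of(1)[OF L]] and fl = mm_facts[OF ml_of(2)[OF l]]
  have vL: "v \<notin> Vs FL" using P1W[OF L l Wv _ vl] by blast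
  have vng: "\<And>g. g \<in> Fl \<Longrightarrow> v \<notin> g" using vl by (auto simp: Vs_iff)
  have vnh: "\<And>g. g \<in> FL \<Longrightarrow> v \<notin> g" using vL by (auto simp: Vs_iff)
  from Wv consider (d1) "degree E v = 1" | (d2) t where "degree E v = 2" "t \<in> Tri2 E" "v \<in> t"
    unfolding W_def by blast
  then show False
  proof cases
    case d1
    have c: "card {e\<in>E. v\<in>e} = 1" using d1 unfolding degree_def .
    obtain z where z: "{e\<in>E. v\<in>e} = {z}" using c by (rule card_1_singletonE)
    have "z \<in> {e\<in>E. v\<in>e}" using z by simp
    hence eE: "z \<in> E" "v \<in> z" by auto
    obtain u where u: "u \<noteq> v" "z = {v,u}" using edge_other[OF sg eE] by blast
    obtain g where g: "g \<in> Fl" "g \<inter> z \<noteq> {}" using max_meets[OF sg ml_of(2)[OF l] eE(1)] by blast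
    have ug: "u \<in> g" using g vng[OF g(1)] u by auto
    obtain h where h: "h \<in> FL" "h \<inter> z \<noteq> {}" using max_meets[OF sg ml_of(1)[OF L] eE(1)] by blast
    have uh: "u \<in> h" using h vnh[OF h(1)] u by auto
    show False
    proof (cases "h \<in> Fl")
      case True
      show False using coreB[OF L l eE(1) u(2) vL vl h(1) uh True] .
    next
      case False
      have "g \<notin> FL"
      proof
        assume "g \<in> FL"
        hence "g = h" using matchingD[OF fL(2) _ h(1) ug uh] by blast
        thus False using False g by simp
      qed
      obtain M where M: "matching_in (E - FL) M" "card M = L_num E" using exM[OF L] by blast
      have gM: "g \<in> M" using key[OF L l M] g \<open>g \<notin> FL\<close> by blast
      have mM: "matching M" and ME: "M \<subseteq> E - FL" using M(1) unfolding matching_in_def by auto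
      define FL' where "FL' = insert z (FL - {h})"
      have zFL: "z \<notin> FL" using vnh eE by blast
      have dis: "\<forall>k\<in>FL - {h}. k \<inter> z = {}"
      proof
        fix k assume k: "k \<in> FL - {h}"
        have "v \<notin> k" using vnh k by blast
        moreover have "u \<notin> k" using matchingD[OF fL(2), of k h u] k h uh by auto
        ultimately show "k \<inter> z = {}" using u by auto
      qed
      have mFL': "max_matching E FL'"
      proof -
        have "matching FL'" unfolding FL'_def using matching_insert[OF _ dis] matching_subset[OF fL(2)] by blast
        moreover have "FL' \<subseteq> E" unfolding FL'_def using fL(1) eE by auto
        moreover have "card FL' = card FL" unfolding FL'_def using zFL h(1) fL(4) card_Suc_Diff1[OF fL(4) h(1)]
          by simp
        ultimately show ?thesis using fL(3) unfolding max_matching_def matching_in_def by simp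
      qed
      have "z \<notin> M"
      proof
        assume "z \<in> M"
        hence "z = g" using matchingD[OF mM _ gM, of z u] ug u by auto
        thus False using vng[OF g(1)] eE by simp
      qed
      hence "matching_in (E - FL') M" using ME mM unfolding FL'_def matching_in_def by blast
      hence "card M \<le> nu (E - FL')" using nu_upper fin by blast
      moreover have "nu (E - FL') \<le> L_num E" using L_upper[OF fin mFL'] .
      ultimately have "optL FL'" using M(2) mFL' unfolding optL_def by simp
      moreover have "v \<in> Vs FL'" unfolding FL'_def using eE by (auto simp: Vs_iff)
      ultimately show False using P1W[OF _ l Wv _ vl] by blast
    qed
  next
    case d2
    obtain d w where s: "v\<noteq>d" "v\<noteq>w" "d\<noteq>w" "t = {v,d,w}" "{v,d} \<in> E" "{v,w} \<in> E" "{d,w} \<in> E"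
      "degree E d = 2" "{e\<in>E. v\<in>e} = {{v,d},{v,w}}" "{e\<in>E. d\<in>e} = {{v,d},{d,w}}"
      using tri_struct[OF d2(2) d2(3) d2(1)] by blast
    have gen: "\<And>g. g \<in> E \<Longrightarrow> g \<inter> {v,d} \<noteq> {} \<Longrightarrow> v \<notin> g \<Longrightarrow> g = {d,w}"
    proof -
      fix g assume a: "g \<in> E" "g \<inter> {v,d} \<noteq> {}" "v \<notin> g"
      hence "g \<in> {e\<in>E. d\<in>e}" by auto
      hence "g = {v,d} \<or> g = {d,w}" using s(10) by simp
      thus "g = {d,w}" using a(3) by auto
    qed
    obtain g where g: "g \<in> Fl" "g \<inter> {v,d} \<noteq> {}" using max_meets[OF sg ml_of(2)[OF l] s(5)] by blast
    obtain h where h: "h \<in> FL" "h \<inter> {v,d} \<noteq> {}" using max_meets[OF sg ml_of(1)[OF L] s(5)] by blast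
    have "g = {d,w}" using gen[of g] g vng fl(1) by blast
    moreover have "h = {d,w}" using gen[of h] h vnh fL(1) by blast
    ultimately have "h \<in> Fl" using g by simp
    moreover have "d \<in> h" using \<open>h = {d,w}\<close> by simp
    ultimately show False using coreB[OF L l s(5) refl vL vl h(1)] by blast
  qed
qed

end

context lg begin

lemma finVs: "F \<subseteq> E \<Longrightarrow> finite F \<Longrightarrow> finite (Vs F)"
proof -
  assume a: "F \<subseteq> E" "finite F"
  have "\<forall>e\<in>F. finite e"
  proof
    fix e assume "e \<in> F"
    hence "e \<in> E" using a by auto
    then obtain p q where "e = {p,q}" using sg unfolding simple_graph_def by metis
    thus "finite e" by simp
  qed
  thus ?thesis unfolding Vs_def using a(2) by blast
qed

lemma not_V1_aux:
  assumes fT: "\<forall>t\<in>Tri2 E. f t \<in> t \<and> degree E (f t) = 2"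
    and yV1: "y \<in> {v \<in> V. degree E v = 1} \<union> f ` Tri2 E"
    and e: "{y,p} \<in> E" "{y,q} \<in> E" "p \<noteq> q" "p \<noteq> y" "q \<noteq> y"
  shows "\<exists>t'\<in>Tri2 E. y = f t' \<and> t' = {y,p,q}"
proof -
  have ne: "{y,p} \<noteq> {y,q}" using e(3-5) by (auto simp: doubleton_eq_iff)
  have "degree E y \<noteq> 1"
  proof
    assume "degree E y = 1"
    hence "{y,p} = {y,q}" using deg1_uniq[of y "{y,p}" "{y,q}"] e(1,2) by simp
    thus False using ne by simp
  qed
  hence "y \<in> f ` Tri2 E" using yV1 by blast
  then obtain t' where t': "t' \<in> Tri2 E" "y = f t'" by blast
  have yt: "y \<in> t'" and dy: "degree E y = 2" using fT t' by auto
  have es: "{e\<in>E. y\<in>e} = {{y,p},{y,q}}"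
  proof (rule card2_eq)
    show "finite {e\<in>E. y\<in>e}" using fin by simp
    show "card {e\<in>E. y\<in>e} = 2" using dy unfolding degree_def .
    show "{y,p} \<in> {e\<in>E. y\<in>e}" using e(1) by simp
    show "{y,q} \<in> {e\<in>E. y\<in>e}" using e(2) by simp
    show "{y,p} \<noteq> {y,q}" using ne .
  qed
  have tr: "triangle E t'" using t'(1) unfolding Tri2_def by simp
  have "t' = {y,p,q}" using tri_unique[OF tr yt es e(3-5)] .
  thus ?thesis using t' by blast
qed

lemma part2:
  assumes V1: "is_V1 V E V1"
  shows "\<exists>Fl FL. optl Fl \<and> optL FL \<and> V1 \<subseteq> Vs (FL \<inter> Fl) \<union> (Vs Fl - Vs FL)"
proof -
  obtain f where fV: "(\<forall>t\<in>Tri2 E. f t \<in> t \<and> degree E (f t) = 2) \<and>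
    V1 = {v \<in> V. degree E v = 1} \<union> f ` Tri2 E" using V1 unfolding is_V1_def by (elim exE) (rule that)
  have f: "\<forall>t\<in>Tri2 E. f t \<in> t \<and> degree E (f t) = 2" using fV by (rule conjunct1)
  have V1d: "V1 = {v \<in> V. degree E v = 1} \<union> f ` Tri2 E" using fV by (rule conjunct2)
  have V1W: "\<And>x. x \<in> V1 \<Longrightarrow> W x" using f unfolding V1d W_def by auto
  obtain Fl where l: "optl Fl" using l_attained[OF fin] unfolding optl_def by blast
  obtain FL0 where L0: "optL FL0" using L_attained[OF fin] unfolding optL_def by blast
  obtain FL where L: "optL FL" and mn: "\<And>F. optL F \<Longrightarrow> card (Vs FL \<inter> V1) \<le> card (Vs F \<inter> V1)"
    using ex_has_least_nat[of optL FL0 "\<lambda>F. card (Vs F \<inter> V1)"] L0 by blast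
  note fL = mm_facts[OF ml_of(1)[OF L]] and fl = mm_facts[OF ml_of(2)[OF l]]
  have "V1 \<subseteq> Vs (FL \<inter> Fl) \<union> (Vs Fl - Vs FL)"
  proof
    fix x assume xV1: "x \<in> V1"
    have xl: "x \<in> Vs Fl" using H1[OF l V1W[OF xV1]] .
    show "x \<in> Vs (FL \<inter> Fl) \<union> (Vs Fl - Vs FL)"
    proof (cases "x \<in> Vs FL")
      case False thus ?thesis using xl by blast
    next
      case True
      obtain e where e: "e \<in> FL" "x \<in> e" using True by (auto simp: Vs_iff)
      obtain g where g: "g \<in> Fl" "x \<in> g" using xl by (auto simp: Vs_iff)
      have eE: "e \<in> E" and gE: "g \<in> E" using e g fL(1) fl(1) by auto
      from xV1 consider (d1) "degree E x = 1" | (d2) t where "t \<in> Tri2 E" "x = f t"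
        unfolding V1d by blast
      then show ?thesis
      proof cases
        case d1
        have "e = g" using deg1_uniq[OF d1 eE gE e(2) g(2)] .
        thus ?thesis using e g by (auto simp: Vs_iff)
      next
        case d2
        have xt: "x \<in> t" and dx: "degree E x = 2" using f d2 by auto
        obtain d w where s: "x\<noteq>d" "x\<noteq>w" "d\<noteq>w" "t = {x,d,w}" "{x,d} \<in> E" "{x,w} \<in> E" "{d,w} \<in> E"
          "degree E d = 2" "{e\<in>E. x\<in>e} = {{x,d},{x,w}}" "{e\<in>E. d\<in>e} = {{x,d},{d,w}}"
          using tri_struct[OF d2(1) xt dx] by blast
        have "W d" unfolding W_def using s(4) s(8) d2(1) by auto
        hence "d \<in> Vs Fl" using H1[OF l] by blast
        then obtain g' where g': "g' \<in> Fl" "d \<in> g'" by (auto simp: Vs_iff)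
        have "g' \<in> {e\<in>E. d\<in>e}" using g' fl(1) by auto
        hence g'c: "g' = {x,d} \<or> g' = {d,w}" using s(10) by simp
        have "g \<in> {e\<in>E. x\<in>e}" using g gE by auto
        hence gc: "g = {x,d} \<or> g = {x,w}" using s(9) by simp
        have gxd: "g = {x,d}"
        proof (rule ccontr)
          assume "g \<noteq> {x,d}"
          hence gxw: "g = {x,w}" using gc by simp
          from g'c show False
          proof
            assume "g' = {x,d}"
            thus False using matchingD[OF fl(2) g(1) g'(1), of x] gxw s by (auto simp: doubleton_eq_iff)
          next
            assume "g' = {d,w}"
            thus False using matchingD[OF fl(2) g(1) g'(1), of w] gxw s by (auto simp: doubleton_eq_iff)
          qed
        qed
        have "e \<in> {e\<in>E. x\<in>e}" using e eE by auto
        hence ec: "e = {x,d} \<or> e = {x,w}" using s(9) by simp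
        show ?thesis
        proof (cases "e = {x,d}")
          case True
          hence "e \<in> FL \<inter> Fl" using e g gxd by simp
          thus ?thesis using e by (auto simp: Vs_iff)
        next
          case False
          hence exw: "e = {x,w}" using ec by simp
          \<comment> \<open>swap argument, contradicting minimality\<close>
          have dL: "d \<notin> Vs FL"
          proof
            assume "d \<in> Vs FL"
            then obtain k where k: "k \<in> FL" "d \<in> k" by (auto simp: Vs_iff)
            have "k \<in> {e\<in>E. d\<in>e}" using k fL(1) by auto
            hence "k = {x,d} \<or> k = {d,w}" using s(10) by simp
            thus False
            proof
              assume "k = {x,d}"
              thus False using matchingD[OF fL(2) k(1) e(1), of x] exw s(1-3) by (auto simp: doubleton_eq_iff)
            next
              assume "k = {d,w}"
              thus False using matchingD[OF fL(2) k(1) e(1), of w] exw s(1-3) by (auto simp: doubleton_eq_iff)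
            qed
          qed
          define FL' where "FL' = insert {d,w} (FL - {e})"
          have dwFL: "{d,w} \<notin> FL" using dL by (auto simp: Vs_iff)
          have dis: "\<forall>k\<in>FL - {e}. k \<inter> {d,w} = {}"
          proof
            fix k assume k: "k \<in> FL - {e}"
            have "d \<notin> k" using dL k by (auto simp: Vs_iff)
            moreover have "w \<notin> k" using matchingD[OF fL(2), of k e w] k e exw by auto
            ultimately show "k \<inter> {d,w} = {}" by auto
          qed
          have mFL': "max_matching E FL'"
          proof -
            have "matching FL'" unfolding FL'_def using matching_insert[OF _ dis] matching_subset[OF fL(2)] by blast
            moreover have "FL' \<subseteq> E" unfolding FL'_def using fL(1) s(7) by auto
            moreover have "card FL' = card FL" unfolding FL'_def using dwFL e(1) fL(4) card_Suc_Diff1[OF fL(4) e(1)]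
              by simp
            ultimately show ?thesis using fL(3) unfolding max_matching_def matching_in_def by simp
          qed
          obtain M where M: "matching_in (E - FL) M" "card M = L_num E" using exM[OF L] by blast
          have mM: "matching M" and ME: "M \<subseteq> E - FL" using M(1) unfolding matching_in_def by auto
          have fM: "finite M" using ME fin finite_subset by blast
          have "\<exists>M'. matching_in (E - FL') M' \<and> card M' = card M"
          proof (cases "{d,w} \<in> M")
            case False
            hence "matching_in (E - FL') M" using ME mM unfolding FL'_def matching_in_def by blast
            thus ?thesis by blast
          next
            case True
            define M' where "M' = insert {x,w} (M - {{d,w}})"
            have eM: "{x,w} \<notin> M" using ME e exw by blast
            have dis2: "\<forall>k\<in>M - {{d,w}}. k \<inter> {x,w} = {}"
            proof
              fix k assume k: "k \<in> M - {{d,w}}"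
              have "w \<notin> k" using matchingD[OF mM, of k "{d,w}" w] k True by auto
              moreover have "x \<notin> k"
              proof
                assume "x \<in> k"
                hence "k \<in> {e\<in>E. x\<in>e}" using k ME by auto
                hence "k = {x,d} \<or> k = {x,w}" using s(9) by simp
                thus False
                proof
                  assume "k = {x,d}"
                  thus False using matchingD[OF mM, of k "{d,w}" d] k True by auto
                next
                  assume "k = {x,w}" thus False using k eM by simp
                qed
              qed
              ultimately show "k \<inter> {x,w} = {}" by auto
            qed
            have "matching M'" unfolding M'_def using matching_insert[OF _ dis2] matching_subset[OF mM] by blast
            moreover have "M' \<subseteq> E - FL'"
            proof -
              have "{x,w} \<notin> FL'" unfolding FL'_def using exw s(1-3) by (auto simp: doubleton_eq_iff)
              moreover have "M - {{d,w}} \<subseteq> E - FL'" unfolding FL'_def using ME by blast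
              ultimately show ?thesis unfolding M'_def using s(6) by blast
            qed
            moreover have "card M' = card M" unfolding M'_def using eM True fM card_Suc_Diff1[OF fM True] by simp
            ultimately show ?thesis unfolding matching_in_def by blast
          qed
          then obtain M' where M': "matching_in (E - FL') M'" "card M' = card M" by blast
          have "card M' \<le> nu (E - FL')" using nu_upper fin M'(1) by blast
          moreover have "nu (E - FL') \<le> L_num E" using L_upper[OF fin mFL'] .
          ultimately have L': "optL FL'" using M(2) M'(2) mFL' unfolding optL_def by simp
          have nV1: "\<And>y. y \<in> {d,w} \<Longrightarrow> y \<notin> V1"
          proof -
            fix y assume y: "y \<in> {d,w}"
            show "y \<notin> V1"
            proof
              assume yV1: "y \<in> V1"
              hence yV1': "y \<in> {v \<in> V. degree E v = 1} \<union> f ` Tri2 E" using V1d by simp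
              have a1: "{d,x} \<in> E" using s(5) by (simp add: insert_commute)
              have a2: "{w,x} \<in> E" using s(6) by (simp add: insert_commute)
              have a3: "{w,d} \<in> E" using s(7) by (simp add: insert_commute)
              show False
              proof (cases "y = d")
                case True
                obtain t' where t': "t' \<in> Tri2 E" "d = f t'" "t' = {d,x,w}"
                  using not_V1_aux[OF f _ a1 s(7) s(2) s(1) s(3)[symmetric]] yV1' True by blast
                have "t' = t" using t'(3) s(4) by (simp add: insert_commute)
                thus False using t'(2) d2(2) s(1) by simp
              next
                case False
                hence yw: "y = w" using y by simp
                obtain t' where t': "t' \<in> Tri2 E" "w = f t'" "t' = {w,x,d}"
                  using not_V1_aux[OF f _ a2 a3 s(1) s(2) s(3)] yV1' yw by blast
                have "t' = t" using t'(3) s(4) by (simp add: insert_commute)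
                thus False using t'(2) d2(2) s(2) by simp
              qed
            qed
          qed
          have sub: "Vs FL' \<inter> V1 \<subseteq> (Vs FL \<inter> V1) - {x}"
          proof
            fix y assume y: "y \<in> Vs FL' \<inter> V1"
            then obtain k where k: "k \<in> FL'" "y \<in> k" by (auto simp: Vs_iff)
            show "y \<in> (Vs FL \<inter> V1) - {x}"
            proof (cases "k = {d,w}")
              case True thus ?thesis using nV1 k y by blast
            next
              case False
              hence kF: "k \<in> FL - {e}" using k unfolding FL'_def by auto
              have "x \<notin> k" using matchingD[OF fL(2), of k e x] kF e by auto
              thus ?thesis using kF k y by (auto simp: Vs_iff)
            qed
          qed
          have "x \<in> Vs FL \<inter> V1" using True xV1 by simp
          hence "Vs FL' \<inter> V1 \<subset> Vs FL \<inter> V1" using sub by blast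
          moreover have "finite (Vs FL \<inter> V1)" using finVs[OF fL(1) fL(4)] by simp
          ultimately have "card (Vs FL' \<inter> V1) < card (Vs FL \<inter> V1)" by (rule psubset_card_mono[rotated])
          thus ?thesis using mn[OF L'] by simp
        qed
      qed
    qed
  qed
  thus ?thesis using l L by blast
qed

end

theorem claim5:
  fixes V :: "'a set" and E :: "'a set set" and V1 :: "'a set"
  assumes "simple_graph V E"
    and "graph_connected V E"
    and "card V \<ge> 3"
    and "L_num E = 2 * l_num E"
    and "is_V1 V E V1"
  shows "(\<forall>FL Fl. max_matching E FL \<and> nu (E - FL) = L_num E \<and>
                 max_matching E Fl \<and> nu (E - Fl) = l_num E \<longrightarrow>
                 (Vs FL - Vs Fl) \<inter> V1 = {})
       \<and> (\<exists>Fl FL. max_matching E Fl \<and> nu (E - Fl) = l_num E \<and>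
                 max_matching E FL \<and> nu (E - FL) = L_num E \<and>
                 V1 \<subseteq> Vs (FL \<inter> Fl) \<union> (Vs Fl - Vs FL))"
proof -
  interpret lg V E using assms(1,4) by unfold_locales
  obtain f where fV: "(\<forall>t\<in>Tri2 E. f t \<in> t \<and> degree E (f t) = 2) \<and>
    V1 = {v \<in> V. degree E v = 1} \<union> f ` Tri2 E" using assms(5) unfolding is_V1_def by (elim exE) (rule that)
  have f: "\<forall>t\<in>Tri2 E. f t \<in> t \<and> degree E (f t) = 2" using fV by (rule conjunct1)
  have V1d: "V1 = {v \<in> V. degree E v = 1} \<union> f ` Tri2 E" using fV by (rule conjunct2)
  have V1W: "\<And>x. x \<in> V1 \<Longrightarrow> W x" using f unfolding V1d W_def by auto
  have p1: "\<forall>FL Fl. max_matching E FL \<and> nu (E - FL) = L_num E \<and>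
                 max_matching E Fl \<and> nu (E - Fl) = l_num E \<longrightarrow>
                 (Vs FL - Vs Fl) \<inter> V1 = {}"
  proof (intro allI impI)
    fix FL Fl assume h: "max_matching E FL \<and> nu (E - FL) = L_num E \<and>
                 max_matching E Fl \<and> nu (E - Fl) = l_num E"
    hence L: "optL FL" and l: "optl Fl" unfolding optL_def optl_def by auto
    show "(Vs FL - Vs Fl) \<inter> V1 = {}"
    proof (rule equals0I)
      fix x assume "x \<in> (Vs FL - Vs Fl) \<inter> V1"
      thus False using P1W[OF L l V1W] by blast
    qed
  qed
  obtain Fl FL where "optl Fl" "optL FL" "V1 \<subseteq> Vs (FL \<inter> Fl) \<union> (Vs Fl - Vs FL)"
    using part2[OF assms(5)] by blast
  hence p2: "\<exists>Fl FL. max_matching E Fl \<and> nu (E - Fl) = l_num E \<and>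
                 max_matching E FL \<and> nu (E - FL) = L_num E \<and>
                 V1 \<subseteq> Vs (FL \<inter> Fl) \<union> (Vs Fl - Vs FL)"
    unfolding optL_def optl_def by blast
  show ?thesis using p1 p2 by blast
qed

end
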